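(* Let $N\ge1$, $f:\mathbb{N}^N\to\mathbb{N}$, $p$ a prime, $n$ a nonnegative integer and $\mathbf{m}\in\mathbb{N}^N$. Then $\binom{np}{p\mathbf{m}}_f\equiv\binom{n}{\mathbf{m}}_f\pmod p$.
   Context: $\mathbb{N}=\{0,1,2,\dots\}$. For $k\ge0$ and $\mathbf{x}\in\mathbb{N}^N$, $\binom{k}{\mathbf{x}}_f=\sum_{\mathbf{m}_1+\cdots+\mathbf{m}_k=\mathbf{x}} f(\mathbf{m}_1)\cdots f(\mathbf{m}_k)$ over tuples of vectors in $\mathbb{N}^N$. *)

theory Defs
  imports Main "HOL-Number_Theory.Number_Theory"
begin

text \<open>Vectors in N^N are modelled as functions nat => nat vanishing outside {..<N}.\<close>
definition nvecs :: "nat \<Rightarrow> (nat \<Rightarrow> nat) set" where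
  "nvecs N = {x. \<forall>i\<ge>N. x i = 0}"

text \<open>k-tuples (m_0,...,m_(k-1)) of vectors of N^N with m_0 + ... + m_(k-1) = x;
  a tuple is a function on {..<k}, extended by the zero vector outside.\<close>
definition tuples_sum :: "nat \<Rightarrow> nat \<Rightarrow> (nat \<Rightarrow> nat) \<Rightarrow> (nat \<Rightarrow> nat \<Rightarrow> nat) set" where
  "tuples_sum N k x = {ms. (\<forall>j<k. ms j \<in> nvecs N) \<and> (\<forall>j\<ge>k. ms j = (\<lambda>_. 0))
      \<and> (\<forall>i. (\<Sum>j<k. ms j i) = x i)}"

definition gbinom :: "nat \<Rightarrow> ((nat \<Rightarrow> nat) \<Rightarrow> nat) \<Rightarrow> nat \<Rightarrow> (nat \<Rightarrow> nat) \<Rightarrow> nat" where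
  "gbinom N f k x = (\<Sum>ms\<in>tuples_sum N k x. \<Prod>j<k. f (ms j))"

end

theory Submission
  imports Defs
begin

lemma funpow_period:
  assumes "(s^^p) x = x"
  shows "(s^^(p*q + r)) x = (s^^r) x"
proof -
  have "(s^^(p*q)) x = x"
  proof (induction q)
    case 0 then show ?case by simp
  next
    case (Suc q)
    have "(s^^(p*Suc q)) x = (s^^p) ((s^^(p*q)) x)"
      by (simp add: funpow_add)
    then show ?case using Suc assms by simp
  qed
  moreover have "(s^^(p*q + r)) x = (s^^r) ((s^^(p*q)) x)"
    by (simp add: funpow_add add.commute)
  ultimately show ?thesis by simp
qed

lemma funpow_mod_period:
  assumes "(s^^p) x = x"
  shows "(s^^k) x = (s^^(k mod p)) x"
  using funpow_period[OF assms, of "k div p" "k mod p"] by simp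

lemma funpow_shift:
  fixes s :: "'a \<Rightarrow> 'a"
  assumes "(s^^a) x = (s^^b) x"
  shows "(s^^(c+a)) x = (s^^(c+b)) x"
proof -
  have "(s^^(c+a)) x = (s^^c) ((s^^a) x)" by (simp add: funpow_add)
  also have "\<dots> = (s^^c) ((s^^b) x)" using assms by simp
  also have "\<dots> = (s^^(c+b)) x" by (simp add: funpow_add)
  finally show ?thesis .
qed

lemma orbit_cong:
  fixes s :: "'a \<Rightarrow> 'a" and g :: "'a \<Rightarrow> nat"
  assumes "prime p" "finite S" "\<forall>x\<in>S. s x \<in> S" "\<forall>x\<in>S. (s^^p) x = x" "\<forall>x\<in>S. g (s x) = g x"
  shows "[sum g S = sum g {x\<in>S. s x = x}] (mod p)"
  using assms(2,3,4,5)
proof (induction S rule: finite_psubset_induct)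
  case (psubset S)
  have p2: "p \<ge> 2" using assms(1) prime_ge_2_nat by blast
  show ?case
  proof (cases "\<forall>x\<in>S. s x = x")
    case True
    then have "{x\<in>S. s x = x} = S" by auto
    then show ?thesis by simp
  next
    case False
    then obtain x where xS: "x \<in> S" and nf: "s x \<noteq> x" by auto
    have per: "(s^^p) x = x" using psubset xS by auto
    have inS: "(s^^k) x \<in> S" for k
      by (induction k) (use psubset.prems xS in auto)
    have gk: "g ((s^^k) x) = g x" for k
      by (induction k) (use psubset.prems inS in auto)
    have md: "(s^^k) x = (s^^(k mod p)) x" for k
      using funpow_mod_period[OF per] .
    define Ob where "Ob = (\<lambda>i. (s^^i) x) ` {..<p}"
    have OS: "Ob \<subseteq> S" using inS Ob_def by auto
    have xO: "x \<in> Ob" using p2 Ob_def by (auto intro!: image_eqI[of _ _ 0])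
    have inO: "(s^^k) x \<in> Ob" for k
      using md[of k] p2 Ob_def by auto
    have inj: "inj_on (\<lambda>i. (s^^i) x) {..<p}"
    proof (rule inj_onI, rule ccontr)
      fix i j assume i: "i \<in> {..<p}" and j: "j \<in> {..<p}" and eq: "(s^^i) x = (s^^j) x" and ne: "i \<noteq> j"
      have "\<exists>d. 0 < d \<and> d < p \<and> (s^^d) x = x"
      proof -
        { fix a b assume a: "a < p" "b < p" "a < b" "(s^^a) x = (s^^b) x"
          have e0: "(s^^((p-a)+a)) x = (s^^((p-a)+b)) x" using funpow_shift[OF a(4)] .
          have "p-a+a = p" using a by simp
          then have e1: "(s^^((p-a)+a)) x = x" using per by simp
          have "p-a+b = p*1+(b-a)" using a by simp
          then have e2: "(s^^((p-a)+b)) x = (s^^(b-a)) x" by (simp only: funpow_period[OF per])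
          have "(s^^(b-a)) x = x" using e0 e1 e2 by simp
          then have "\<exists>d. 0 < d \<and> d < p \<and> (s^^d) x = x" using a by (intro exI[of _ "b-a"]) auto }
        note * = this
        show ?thesis
        proof (cases "i < j")
          case True then show ?thesis using * i j eq by auto
        next
          case False then have "j < i" using ne by simp
          then show ?thesis using * i j eq by auto
        qed
      qed
      then obtain d where d: "0 < d" "d < p" "(s^^d) x = x" by blast
      have dk: "(s^^(d*k)) x = x" for k
      proof (induction k)
        case (Suc k)
        have "(s^^(d*Suc k)) x = (s^^d) ((s^^(d*k)) x)" by (simp add: funpow_add)
        then show ?case using Suc d by simp
      qed simp
      have "\<not> p dvd d" using d by (auto dest: dvd_imp_le)
      then have "coprime p d" using prime_imp_coprime[OF assms(1)] by blast
      then have "coprime d p" by (simp add: coprime_commute)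
      then obtain k where "[d * k = Suc 0] (mod p)" using cong_solve_coprime_nat by blast
      then have "d * k mod p = 1" using p2 by (simp add: cong_def)
      then have "(s^^1) x = x" using dk[of k] md[of "d*k"] by simp
      then show False using nf by simp
    qed
    have cardO: "card Ob = p" using inj Ob_def by (simp add: card_image)
    have sumO: "sum g Ob = p * g x"
    proof -
      have "sum g Ob = sum (\<lambda>i. g ((s^^i) x)) {..<p}" using inj Ob_def by (simp add: sum.reindex)
      also have "\<dots> = p * g x" using gk by simp
      finally show ?thesis .
    qed
    have fixO: "s y \<noteq> y" if "y \<in> Ob" for y
    proof
      assume fy: "s y = y"
      from that obtain i where i: "i < p" "y = (s^^i) x" using Ob_def by auto
      have "(s^^(Suc i)) x = (s^^i) x" using fy i by simp
      from funpow_shift[OF this, of "p - i"] have "(s^^(p - i + Suc i)) x = (s^^(p-i+i)) x" .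
      moreover have "p - i + Suc i = p*1 + 1" "p - i + i = p" using i by auto
      ultimately have "(s^^1) x = x" using funpow_period[OF per, of 1 1] per by simp
      then show False using nf by simp
    qed
    define S' where "S' = S - Ob"
    have sub: "S' \<subset> S" using xS xO S'_def by auto
    have cl: "\<forall>y\<in>S'. s y \<in> S'"
    proof
      fix y assume y: "y \<in> S'"
      have yS: "y \<in> S" "y \<notin> Ob" using y S'_def by auto
      show "s y \<in> S'"
      proof (rule ccontr)
        assume "s y \<notin> S'"
        then have "s y \<in> Ob" using psubset yS S'_def by auto
        then obtain i where i: "s y = (s^^i) x" using Ob_def by auto
        have "(s^^p) y = y" using psubset yS by auto
        moreover have "(s^^p) y = (s^^(p-1)) (s y)"
        proof -
          have "(s^^Suc (p-1)) y = (s^^(p-1)) (s y)" by (simp only: funpow_Suc_right comp_apply)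
          moreover have "Suc (p-1) = p" using p2 by simp
          ultimately show ?thesis by simp
        qed
        moreover have "(s^^(p-1)) ((s^^i) x) = (s^^(p-1+i)) x" by (simp add: funpow_add)
        ultimately have "y = (s^^(p-1+i)) x" using i by simp
        then show False using inO[of "p-1+i"] yS by simp
      qed
    qed
    have IH: "[sum g S' = sum g {x\<in>S'. s x = x}] (mod p)"
      using psubset.IH[OF sub] cl psubset.prems S'_def by auto
    have fixeq: "{x\<in>S'. s x = x} = {x\<in>S. s x = x}" using fixO S'_def by auto
    have "sum g S = sum g Ob + sum g S'"
      using sum.subset_diff[OF OS psubset.hyps] S'_def by (simp add: add.commute)
    then have "sum g S = p * g x + sum g S'" using sumO by simp
    then have c1: "[sum g S = sum g S'] (mod p)" by (simp add: cong_def)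
    show ?thesis using cong_trans[OF c1 IH] fixeq by simp
  qed
qed


definition rot :: "nat \<Rightarrow> nat \<Rightarrow> nat \<Rightarrow> nat" where
  "rot p K j = (if j < K then p*(j div p) + (j mod p + 1) mod p else j)"

lemma divmod_block:
  fixes p q r :: nat assumes "r < p"
  shows "(p*q + r) div p = q" "(p*q + r) mod p = r"
  using assms by auto

lemma rot_pow:
  assumes "p > 0"
  shows "(rot p (n*p) ^^ k) j = (if j < n*p then p*(j div p) + (j mod p + k) mod p else j)"
proof (induction k)
  case 0 then show ?case by (simp add: mult.commute)
next
  case (Suc k)
  show ?case
  proof (cases "j < n*p")
    case True
    define q where "q = j div p"
    define r where "r = (j mod p + k) mod p"
    have r: "r < p" using assms r_def by simp
    have q: "q < n" using True q_def by (simp add: less_mult_imp_div_less)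
    have "p*q + r < n*p"
    proof -
      have "p*q + r < p*q + p" using r by simp
      also have "\<dots> = p * Suc q" by simp
      also have "\<dots> \<le> p * n" using q by (intro mult_le_mono2) simp
      finally show ?thesis by (simp add: mult.commute)
    qed
    note lt = this
    have k: "(rot p (n*p) ^^ k) j = p*q + r" using Suc True q_def r_def by simp
    have "(rot p (n*p) ^^ Suc k) j = rot p (n*p) (p*q + r)" using k by simp
    also have "\<dots> = p*q + (r + 1) mod p"
      using lt divmod_block[OF r, of q] by (simp add: rot_def del: mod_Suc)
    finally have "(rot p (n*p) ^^ Suc k) j = p*q + (r + 1) mod p" .
    also have "(r + 1) mod p = (j mod p + Suc k) mod p"
      unfolding r_def by (simp add: mod_Suc_eq)
    finally show ?thesis using True q_def by simp
  next
    case False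
    then show ?thesis using Suc by (simp add: rot_def)
  qed
qed

lemma rot_pow_p:
  assumes "p > 0" shows "(rot p (n*p) ^^ p) j = j"
  using rot_pow[OF assms, where n=n and k=p and j=j] by simp

lemma rot_div:
  assumes "p > 0" shows "rot p (n*p) j div p = j div p"
  using assms by (simp add: rot_def)

lemma rot_lt:
  assumes "p > 0" "j < n*p" shows "rot p (n*p) j < n*p"
proof -
  have "rot p (n*p) j div p = j div p" by (rule rot_div[OF assms(1)])
  then show ?thesis using assms by (metis div_less_iff_less_mult)
qed

lemma rot_bij:
  assumes "p > 0" shows "bij_betw (rot p (n*p)) {..<n*p} {..<n*p}"
proof (rule bij_betw_byWitness[where f' = "rot p (n*p) ^^ (p-1)"])
  have eq: "rot p (n*p) ^^ p = (rot p (n*p) ^^ (p-1)) \<circ> rot p (n*p)"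
       "rot p (n*p) ^^ p = rot p (n*p) \<circ> (rot p (n*p) ^^ (p-1))"
    using assms by (metis Suc_diff_1 funpow_Suc_right, metis Suc_diff_1 funpow.simps(2))
  show "\<forall>a\<in>{..<n*p}. (rot p (n*p) ^^ (p-1)) (rot p (n*p) a) = a"
    using rot_pow_p[OF assms] eq(1) by (metis comp_apply)
  show "\<forall>a\<in>{..<n*p}. rot p (n*p) ((rot p (n*p) ^^ (p-1)) a) = a"
    using rot_pow_p[OF assms] eq(2) by (metis comp_apply)
  show "rot p (n*p) ` {..<n*p} \<subseteq> {..<n*p}" using rot_lt[OF assms] by auto
  have "(rot p (n*p) ^^ k) j < n*p" if "j < n*p" for k j
    using that by (induction k) (auto intro: rot_lt[OF assms])
  then show "(rot p (n*p) ^^ (p-1)) ` {..<n*p} \<subseteq> {..<n*p}" by auto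
qed

lemma sum_div_group:
  fixes v :: "nat \<Rightarrow> nat" assumes "p > 0"
  shows "(\<Sum>j<n*p. v (j div p)) = p * (\<Sum>a<n. v a)"
proof -
  have "(\<Sum>j<n*p. v (j div p)) = (\<Sum>a<n. \<Sum>j\<in>{a*p..<a*p+p}. v (j div p))"
    by (rule sum.nat_group[symmetric])
  also have "\<dots> = (\<Sum>a<n. \<Sum>j\<in>{a*p..<a*p+p}. v a)"
  proof (intro sum.cong refl)
    fix a j assume "j \<in> {a*p..<a*p+p}"
    then have "j div p = a" using assms
      by (metis atLeastLessThan_iff div_nat_eqI mult.commute add.commute mult_Suc_right le_less)
    then show "v (j div p) = v a" by simp
  qed
  also have "\<dots> = p * (\<Sum>a<n. v a)" by (simp add: sum_distrib_left)
  finally show ?thesis .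
qed

lemma prod_div_group:
  fixes v :: "nat \<Rightarrow> nat" assumes "p > 0"
  shows "(\<Prod>j<n*p. v (j div p)) = (\<Prod>a<n. v a ^ p)"
proof -
  have "(\<Prod>j<n*p. v (j div p)) = (\<Prod>a<n. \<Prod>j\<in>{a*p..<a*p+p}. v (j div p))"
    by (rule prod.nat_group[symmetric])
  also have "\<dots> = (\<Prod>a<n. \<Prod>j\<in>{a*p..<a*p+p}. v a)"
  proof (intro prod.cong refl)
    fix a j assume "j \<in> {a*p..<a*p+p}"
    then have "j div p = a" using assms
      by (metis atLeastLessThan_iff div_nat_eqI mult.commute add.commute mult_Suc_right le_less)
    then show "v (j div p) = v a" by simp
  qed
  also have "\<dots> = (\<Prod>a<n. v a ^ p)" by simp
  finally show ?thesis .
qed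

lemma finite_tuples: "finite (tuples_sum N k x)"
proof -
  define D where "D = {..<k} \<times> {..<N}"
  define h :: "(nat \<Rightarrow> nat \<Rightarrow> nat) \<Rightarrow> nat \<times> nat \<Rightarrow> nat" where "h = (\<lambda>ms. \<lambda>ji. if ji \<in> D then ms (fst ji) (snd ji) else undefined)"
  have "inj_on h (tuples_sum N k x)"
  proof (rule inj_onI)
    fix ms ms' assume a: "ms \<in> tuples_sum N k x" "ms' \<in> tuples_sum N k x" "h ms = h ms'"
    show "ms = ms'"
    proof (intro ext)
      fix j i
      show "ms j i = ms' j i"
      proof (cases "j < k")
        case True
        show ?thesis
        proof (cases "i < N")
          case True
          then have "h ms (j,i) = h ms' (j,i)" using a by simp
          then show ?thesis using True \<open>j<k\<close> by (simp add: h_def D_def)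
        next
          case False
          then show ?thesis using a \<open>j<k\<close> by (auto simp: tuples_sum_def nvecs_def)
        qed
      next
        case False
        then show ?thesis using a by (auto simp: tuples_sum_def)
      qed
    qed
  qed
  moreover have "h ` tuples_sum N k x \<subseteq> PiE D (\<lambda>ji. {..x (snd ji)})"
  proof
    fix y assume "y \<in> h ` tuples_sum N k x"
    then obtain ms where ms: "ms \<in> tuples_sum N k x" "y = h ms" by auto
    have "ms j i \<le> x i" if "j < k" for j i
    proof -
      have "ms j i \<le> (\<Sum>j'<k. ms j' i)" using that by (intro member_le_sum) auto
      then show ?thesis using ms by (simp add: tuples_sum_def)
    qed
    then show "y \<in> PiE D (\<lambda>ji. {..x (snd ji)})" using ms by (auto simp: h_def D_def PiE_def extensional_def)
  qed
  moreover have "finite (PiE D (\<lambda>ji. {..x (snd ji)}))" by (intro finite_PiE) (auto simp: D_def)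
  ultimately show ?thesis using inj_on_finite by blast
qed


lemma fermat_nat:
  fixes a p :: nat assumes "prime p" shows "[a^p = a] (mod p)"
proof (cases "p dvd a")
  case True
  have "p > 0" using assms prime_gt_0_nat by blast
  then have "a^p = a * a^(p-1)" by (metis Suc_diff_1 power_Suc)
  then have "p dvd a^p" using True by simp
  then show ?thesis using True by (simp add: cong_def)
next
  case False
  have "[a^(p-1) = 1] (mod p)" using fermat_theorem[OF assms False] .
  then have "[a * a^(p-1) = a * 1] (mod p)" by (rule cong_scalar_left)
  moreover have "a * a^(p-1) = a^p" using assms prime_gt_0_nat
    by (metis Suc_diff_1 power_Suc)
  ultimately show ?thesis by simp
qed

theorem theorem8:
  fixes N n p :: nat and f :: "(nat \<Rightarrow> nat) \<Rightarrow> nat" and m :: "nat \<Rightarrow> nat"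
  assumes "N \<ge> 1" and "prime p" and "m \<in> nvecs N"
  shows "[gbinom N f (n * p) (\<lambda>i. p * m i) = gbinom N f n m] (mod p)"
proof -
  have p0: "p > 0" using assms(2) prime_gt_0_nat by blast
  define R where "R = rot p (n*p)"
  define S where "S = tuples_sum N (n*p) (\<lambda>i. p * m i)"
  define T where "T = tuples_sum N n m"
  define g where "g = (\<lambda>ms::nat \<Rightarrow> nat \<Rightarrow> nat. \<Prod>j<n*p. f (ms j))"
  define sg where "sg = (\<lambda>ms::nat \<Rightarrow> nat \<Rightarrow> nat. ms \<circ> R)"
  have bij: "bij_betw R {..<n*p} {..<n*p}" using rot_bij[OF p0] R_def by simp
  have Rlt: "R j < n*p" if "j < n*p" for j using rot_lt[OF p0 that] R_def by simp
  have Rge: "R j = j" if "\<not> j < n*p" for j using that R_def by (simp add: rot_def)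
  have sS: "\<forall>x\<in>S. sg x \<in> S"
  proof
    fix ms assume ms: "ms \<in> S"
    have "(\<Sum>j<n*p. ms (R j) i) = (\<Sum>j<n*p. ms j i)" for i
      using sum.reindex_bij_betw[OF bij, of "\<lambda>j. ms j i"] by simp
    then show "sg ms \<in> S" using ms Rlt Rge unfolding S_def tuples_sum_def sg_def by auto
  qed
  have spow: "(sg^^k) ms = ms \<circ> (R^^k)" for k ms
  proof (induction k)
    case (Suc k)
    have "(sg^^Suc k) ms = sg ((sg^^k) ms)" by simp
    also have "\<dots> = ((sg^^k) ms) \<circ> R" by (simp add: sg_def)
    also have "\<dots> = ms \<circ> ((R^^k) \<circ> R)" using Suc.IH by (simp add: comp_def)
    also have "(R^^k) \<circ> R = R^^Suc k" by (simp only: funpow_Suc_right)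
    finally show ?case .
  qed simp
  have sper: "\<forall>x\<in>S. (sg^^p) x = x"
    using spow rot_pow_p[OF p0] R_def by (auto simp: comp_def)
  have ginv: "\<forall>x\<in>S. g (sg x) = g x"
  proof
    fix x show "g (sg x) = g x"
      using prod.reindex_bij_betw[OF bij, of "\<lambda>j. f (x j)"] by (simp add: g_def sg_def)
  qed
  have c1: "[sum g S = sum g {x\<in>S. sg x = x}] (mod p)"
    using orbit_cong[OF assms(2) _ sS sper ginv] finite_tuples S_def by blast
  define Fix where "Fix = {x\<in>S. sg x = x}"
  have fixchar: "ms j = ms (p*(j div p))" if ms: "ms \<in> Fix" for ms j
  proof (cases "j < n*p")
    case True
    have inv: "ms \<circ> (R^^k) = ms" for k
    proof -
      have "sg ms = ms" using ms Fix_def by simp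
      then have "(sg^^k) ms = ms" by (induction k) auto
      then show ?thesis using spow[of k ms] by simp
    qed
    have "(R^^(p - j mod p)) j = p*(j div p) + (j mod p + (p - j mod p)) mod p"
      using rot_pow[OF p0] True R_def by simp
    also have "(j mod p + (p - j mod p)) = p" using p0 by simp
    finally have "(R^^(p - j mod p)) j = p*(j div p)" by simp
    then show ?thesis using inv[of "p - j mod p"] by (metis comp_apply)
  next
    case False
    then have "n \<le> j div p" using p0 by (simp add: less_eq_div_iff_mult_less_eq)
    then have le: "n*p \<le> p*(j div p)" by (simp add: mult.commute)
    have "ms \<in> S" using ms Fix_def by simp
    then have all: "\<forall>j\<ge>n*p. ms j = (\<lambda>_. 0)" by (simp add: S_def tuples_sum_def)
    then have "ms (p*(j div p)) = (\<lambda>_. 0)" using le by blast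
    moreover have "ms j = (\<lambda>_. 0)" using all False by simp
    ultimately show ?thesis by simp
  qed
  define E where "E = (\<lambda>(u::nat \<Rightarrow> nat \<Rightarrow> nat) j. u (j div p))"
  have bijE: "bij_betw E T Fix"
  proof (rule bij_betw_byWitness[where f' = "\<lambda>ms a. ms (p*a)"])
    show "\<forall>a\<in>T. (\<lambda>ms a. ms (p*a)) (E a) = a" using p0 by (simp add: E_def)
    show "\<forall>a\<in>Fix. E ((\<lambda>ms a. ms (p*a)) a) = a"
    proof
      fix a assume "a \<in> Fix"
      show "E ((\<lambda>ms a. ms (p*a)) a) = a"
        by (rule ext) (simp add: E_def fixchar[OF \<open>a \<in> Fix\<close>, symmetric])
    qed
    show "E ` T \<subseteq> Fix"
    proof
      fix v assume "v \<in> E ` T"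
      then obtain u where u: "u \<in> T" "v = E u" by auto
      have a: "u (j div p) \<in> nvecs N" if "j < n*p" for j
        using u that by (simp add: T_def tuples_sum_def less_mult_imp_div_less)
      have b: "u (j div p) = (\<lambda>_. 0)" if "\<not> j < n*p" for j
      proof -
        have "n \<le> j div p" using that p0 by (simp add: less_eq_div_iff_mult_less_eq)
        then show ?thesis using u by (simp add: T_def tuples_sum_def)
      qed
      have c: "(\<Sum>j<n*p. u (j div p) i) = p * m i" for i
        using sum_div_group[OF p0, of "\<lambda>a. u a i" n] u by (simp add: T_def tuples_sum_def)
      have d: "sg v = v" using u rot_div[OF p0] by (auto simp: sg_def E_def R_def comp_def)
      show "v \<in> Fix" using a b c d u by (auto simp: Fix_def S_def tuples_sum_def E_def)
    qed
    show "(\<lambda>ms a. ms (p*a)) ` Fix \<subseteq> T"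
    proof
      fix v assume "v \<in> (\<lambda>ms a. ms (p*a)) ` Fix"
      then obtain ms where ms: "ms \<in> Fix" "v = (\<lambda>a. ms (p*a))" by auto
      have mS: "ms \<in> S" using ms Fix_def by simp
      have a: "ms (p*a) \<in> nvecs N" if "a < n" for a
      proof -
        have "p*a < n*p" using that p0 by (simp add: mult.commute)
        then show ?thesis using mS by (simp add: S_def tuples_sum_def)
      qed
      have b: "ms (p*a) = (\<lambda>_. 0)" if "\<not> a < n" for a
      proof -
        have le: "n*p \<le> p*a" using that by (simp add: mult.commute)
        have "\<forall>j\<ge>n*p. ms j = (\<lambda>_. 0)" using mS by (simp add: S_def tuples_sum_def)
        then show ?thesis using le by blast
      qed
      have c: "(\<Sum>a<n. ms (p*a) i) = m i" for i
      proof -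
        have "p * (\<Sum>a<n. ms (p*a) i) = (\<Sum>j<n*p. ms (p*(j div p)) i)"
          using sum_div_group[OF p0, of "\<lambda>a. ms (p*a) i" n] by simp
        also have "\<dots> = (\<Sum>j<n*p. ms j i)" using fixchar[OF ms(1), symmetric] by simp
        also have "\<dots> = p * m i" using mS by (simp add: S_def tuples_sum_def)
        finally show ?thesis using p0 by simp
      qed
      show "v \<in> T" using a b c ms by (simp add: T_def tuples_sum_def)
    qed
  qed
  have "sum g Fix = (\<Sum>u\<in>T. g (E u))"
    using sum.reindex_bij_betw[OF bijE, of g] by simp
  also have "\<dots> = (\<Sum>u\<in>T. \<Prod>a<n. f (u a) ^ p)"
  proof (intro sum.cong refl)
    fix u show "g (E u) = (\<Prod>a<n. f (u a) ^ p)"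
      using prod_div_group[OF p0, of "\<lambda>a. f (u a)" n] by (simp add: g_def E_def)
  qed
  finally have c2: "sum g Fix = (\<Sum>u\<in>T. \<Prod>a<n. f (u a) ^ p)" .
  have c3: "[(\<Sum>u\<in>T. \<Prod>a<n. f (u a) ^ p) = (\<Sum>u\<in>T. \<Prod>a<n. f (u a))] (mod p)"
    by (intro cong_sum cong_prod fermat_nat[OF assms(2)])
  have "gbinom N f (n * p) (\<lambda>i. p * m i) = sum g S" by (simp add: gbinom_def g_def S_def)
  moreover have "gbinom N f n m = (\<Sum>u\<in>T. \<Prod>a<n. f (u a))" by (simp add: gbinom_def T_def)
  ultimately show ?thesis using c1 c2 c3 Fix_def by (metis cong_trans)
qed

end
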